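(* Let $n\ge 1$, $0\le r\le s\le n$ and $0\le k\le n-1$ be integers, with $k\ge 1$ if $r=s$. Then $$M_{r,s}^{n,k}=2\sum_t\sum_j(-1)^j\frac{s-j-r+1+2t}{n-1-j-2t}\binom{k}{2t+1}\binom{k-1-2t}{j}\binom{n-1-j-2t}{s-j}\binom{n-1-j-2t}{r-1-2t}+\frac{s-r}{n-k}\sum_j\binom{k}{j}\binom{n-k}{r-j}\binom{n-k}{s-j},$$ where all sums are over nonnegative integers $t,j$ (only finitely many terms are nonzero). In particular $M_{r,s}^{n,0}=\frac{s-r}{n}\binom{n}{r}\binom{n}{s}$ for $r<s$.
   Context: For $n\ge1$ and $0\le r\le n$, a lattice path from $(0,0)$ to $(r,n-r)$ is a sequence of lattice points $v_0=(0,0),\dots,v_n=(r,n-r)$ with each step $v_i-v_{i-1}\in\{(1,0),(0,1)\}$; its vertex set is $\{v_0,\dots,v_n\}$. $N_k^{n,r}$ denotes the number of ordered pairs of lattice paths from $(0,0)$ to $(r,n-r)$ whose vertex sets share exactly $k$ points other than $(0,0)$ and $(r,n-r)$. For $0\le r<s\le n$, $M_{r,s}^{n,k}$ is the number of pairs $(P,Q)$ with $P$ a lattice path from $(0,0)$ to $(r,n-r)$ and $Q$ a lattice path from $(0,0)$ to $(s,n-s)$ whose vertex sets share exactly $k$ points other than $(0,0)$. For $r=s$ and $k\ge1$, $M_{r,r}^{n,k}:=N_{k-1}^{n,r}$. Binomial coefficients $\binom{a}{b}$ with $a\ge 0$ are $0$ if $b<0$ or $b>a$. *)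

theory Defs
  imports Complex_Main
begin

definition lattice_paths :: "nat \<Rightarrow> nat \<Rightarrow> (nat \<times> nat) list set" where
  "lattice_paths a b = {p. length p = a + b + 1 \<and> p ! 0 = (0,0) \<and> p ! (a + b) = (a, b) \<and>
     (\<forall>i < a + b. p ! Suc i = (fst (p ! i) + 1, snd (p ! i)) \<or>
                   p ! Suc i = (fst (p ! i), snd (p ! i) + 1))}"

definition Npairs :: "nat \<Rightarrow> nat \<Rightarrow> nat \<Rightarrow> nat" where
  "Npairs n r k = card {(P, Q). P \<in> lattice_paths r (n - r) \<and> Q \<in> lattice_paths r (n - r) \<and>
      card (set P \<inter> set Q - {(0,0), (r, n - r)}) = k}"

definition Mpairs :: "nat \<Rightarrow> nat \<Rightarrow> nat \<Rightarrow> nat \<Rightarrow> nat" where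
  "Mpairs n r s k = (if r = s then Npairs n r (k - 1) else
     card {(P, Q). P \<in> lattice_paths r (n - r) \<and> Q \<in> lattice_paths s (n - s) \<and>
      card (set P \<inter> set Q - {(0,0)}) = k})"

definition ibinom :: "int \<Rightarrow> int \<Rightarrow> real" where
  "ibinom a b = (if a < 0 \<or> b < 0 then 0 else real (nat a choose nat b))"

end

theory Submission
  imports Defs
begin


lemma ib_pascal:
  assumes "m \<ge> 1"
  shows "ibinom m a = ibinom (m-1) a + ibinom (m-1) (a-1)"
proof -
  consider "a < 0" | "a = 0" | "a > 0" by linarith
  then show ?thesis
  proof cases
    case 1 then show ?thesis using assms by (simp add: ibinom_def)
  next
    case 2 then show ?thesis using assms by (simp add: ibinom_def)
  next
    case 3
    have "nat m choose nat a = (nat m - 1 choose (nat a - 1)) + (nat m - 1 choose nat a)"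
      using choose_reduce_nat[of "nat m" "nat a"] 3 assms by simp
    moreover have "nat (m-1) = nat m - 1" "nat (a-1) = nat a - 1" using 3 assms by auto
    ultimately show ?thesis using 3 assms by (simp add: ibinom_def)
  qed
qed



type_synonym fn3 = "int \<Rightarrow> int \<Rightarrow> int \<Rightarrow> real"

definition gsh :: "real \<Rightarrow> int \<Rightarrow> int \<Rightarrow> int \<Rightarrow> fn3 \<Rightarrow> fn3" where
  "gsh c a b d f = (\<lambda>n r s. c * f (n-a) (r-b) (s-d))"
definition padd :: "(fn3 \<Rightarrow> fn3) \<Rightarrow> (fn3 \<Rightarrow> fn3) \<Rightarrow> fn3 \<Rightarrow> fn3" where
  "padd A B f = (\<lambda>n r s. A f n r s + B f n r s)"
definition lin :: "(fn3 \<Rightarrow> fn3) \<Rightarrow> bool" where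
  "lin A \<longleftrightarrow> (\<forall>(S::nat set) cf g. A (\<lambda>n r s. \<Sum>i\<in>S. cf i * g i n r s) = (\<lambda>n r s. \<Sum>i\<in>S. cf i * A (g i) n r s))"

lemma pascal_sum:
  fixes X :: "nat \<Rightarrow> nat \<Rightarrow> real"
  shows "(\<Sum>a\<le>k. real (k choose a) * X (Suc a) (k-a)) + (\<Sum>a\<le>k. real (k choose a) * X a (Suc (k-a)))
       = (\<Sum>a\<le>Suc k. real (Suc k choose a) * X a (Suc k - a))"
proof -
  define Y where "Y a = X a (Suc k - a)" for a
  have s1: "(\<Sum>a\<le>Suc k. real (Suc k choose a) * Y a) = Y 0 + (\<Sum>a\<le>k. real (Suc k choose Suc a) * Y (Suc a))"
    by (subst sum.atMost_Suc_shift) simp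
  have s2: "(\<Sum>a\<le>k. real (Suc k choose Suc a) * Y (Suc a)) = (\<Sum>a\<le>k. real (k choose a) * Y (Suc a)) + (\<Sum>a\<le>k. real (k choose Suc a) * Y (Suc a))"
    by (simp add: sum.distrib algebra_simps)
  have s3: "Y 0 + (\<Sum>a\<le>k. real (k choose Suc a) * Y (Suc a)) = (\<Sum>a\<le>Suc k. real (k choose a) * Y a)"
    by (subst sum.atMost_Suc_shift) simp
  have s4: "(\<Sum>a\<le>Suc k. real (k choose a) * Y a) = (\<Sum>a\<le>k. real (k choose a) * Y a)" by simp
  have e1: "(\<Sum>a\<le>k. real (k choose a) * Y (Suc a)) = (\<Sum>a\<le>k. real (k choose a) * X (Suc a) (k-a))"
    by (rule sum.cong) (auto simp: Y_def)
  have e2: "(\<Sum>a\<le>k. real (k choose a) * Y a) = (\<Sum>a\<le>k. real (k choose a) * X a (Suc (k-a)))"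
    by (rule sum.cong) (auto simp: Y_def Suc_diff_le)
  have "(\<Sum>a\<le>Suc k. real (Suc k choose a) * X a (Suc k - a)) = (\<Sum>a\<le>Suc k. real (Suc k choose a) * Y a)"
    by (simp add: Y_def)
  then show ?thesis using s1 s2 s3 s4 e1 e2 by linarith
qed

lemma comm_pow:
  assumes "\<And>g. A (B g) = B (A g)"
  shows "B ((A^^a) g) = (A^^a) (B g)"
  by (induction a) (simp_all add: assms[symmetric])

lemma op_binom:
  assumes "lin A" "lin B" "\<And>g. A (B g) = B (A g)"
  shows "((padd A B)^^k) f n r s = (\<Sum>a\<le>k. real (k choose a) * (A^^a) ((B^^(k-a)) f) n r s)"
proof (induction k arbitrary: n r s)
  case 0
  then show ?case by simp
next
  case (Suc k)
  have IH: "((padd A B)^^k) f = (\<lambda>n r s. \<Sum>a\<le>k. real (k choose a) * (A^^a) ((B^^(k-a)) f) n r s)"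
    using Suc.IH by blast
  have "((padd A B)^^Suc k) f n r s = A (((padd A B)^^k) f) n r s + B (((padd A B)^^k) f) n r s"
    by (simp add: padd_def)
  also have "A (((padd A B)^^k) f) n r s = (\<Sum>a\<le>k. real (k choose a) * (A^^Suc a) ((B^^(k-a)) f) n r s)"
    using assms(1) unfolding IH lin_def by simp
  also have "B (((padd A B)^^k) f) n r s = (\<Sum>a\<le>k. real (k choose a) * (A^^a) ((B^^Suc (k-a)) f) n r s)"
    using assms(2) unfolding IH lin_def by (simp add: comm_pow[where A=A and B=B, OF assms(3)])
  finally show ?case
    using pascal_sum[of k "\<lambda>a b. (A^^a) ((B^^b) f) n r s"] by simp
qed

lemma gsh_pow: "((gsh c a b d)^^m) f n r s = c^m * f (n - int m * a) (r - int m * b) (s - int m * d)"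
  by (induction m arbitrary: n r s) (simp_all add: gsh_def algebra_simps)

lemma lin_gsh: "lin (gsh c a b d)"
  by (simp add: lin_def gsh_def sum_distrib_left algebra_simps)

lemma lin_id: "lin id"
  by (simp add: lin_def)

lemma lin_padd: "lin A \<Longrightarrow> lin B \<Longrightarrow> lin (padd A B)"
  unfolding lin_def padd_def by (simp add: sum.distrib algebra_simps)

lemma gsh_comm: "gsh c a b d (gsh c' a' b' d' g) = gsh c' a' b' d' (gsh c a b d g)"
  by (simp add: gsh_def fun_eq_iff algebra_simps)

definition cop :: "fn3 \<Rightarrow> fn3" where "cop = padd (gsh (-1) 1 0 1) id"
definition Usig :: "real \<Rightarrow> fn3 \<Rightarrow> fn3" where "Usig c = padd (gsh c 1 1 0) cop"
definition Vp :: "fn3 \<Rightarrow> fn3" where "Vp = padd (gsh 1 1 1 1) (gsh 1 1 0 0)"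

lemma cop_pow: "(cop^^m) f n r s = (\<Sum>j\<le>m. real (m choose j) * (-1)^j * f (n - int j) r (s - int j))"
  unfolding cop_def
  by (subst op_binom[where A="gsh (-1) 1 0 1" and B=id]) (simp_all add: lin_gsh lin_id gsh_pow ac_simps)

lemma Usig_pow: "((Usig c)^^k) f n r s = (\<Sum>a\<le>k. real (k choose a) * c^a *
     (\<Sum>j\<le>k-a. real ((k-a) choose j) * (-1)^j * f (n - int a - int j) (r - int a) (s - int j)))"
proof -
  have lc: "lin cop" unfolding cop_def by (simp add: lin_padd lin_gsh lin_id)
  have cm: "\<And>g. gsh c 1 1 0 (cop g) = cop (gsh c 1 1 0 g)"
    by (simp add: cop_def padd_def gsh_def fun_eq_iff algebra_simps)
  show ?thesis unfolding Usig_def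
    apply (subst op_binom[where A="gsh c 1 1 0" and B=cop, OF lin_gsh lc cm])
    apply (rule sum.cong[OF refl])
    apply (simp only: gsh_pow cop_pow sum_distrib_left)
    apply (rule sum.cong[OF refl])
    apply (simp add: ac_simps)
    done
qed

lemma Vp_pow: "(Vp^^k) f n r s = (\<Sum>a\<le>k. real (k choose a) * f (n - int k) (r - int a) (s - int a))"
  unfolding Vp_def
  apply (subst op_binom[where A="gsh 1 1 1 1" and B="gsh 1 1 0 0", OF lin_gsh lin_gsh gsh_comm])
  apply (rule sum.cong[OF refl])
  apply (simp add: gsh_pow of_nat_diff)
  done



definition Vop :: "fn3 \<Rightarrow> fn3" where
  "Vop f = (\<lambda>n r s. f (n-1) r s + f (n-1) (r-1) (s-1) + 2 * f (n-1) (r-1) s)"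
definition Om :: "fn3 \<Rightarrow> fn3" where
  "Om f = (\<lambda>n r s. f n r s - f (n-1) r s - f (n-1) (r-1) s - f (n-1) r (s-1) - f (n-1) (r-1) (s-1))"
definition Ah :: fn3 where
  "Ah n r s = ibinom (n-1) r * ibinom (n-1) (s-1) - ibinom (n-1) (r-1) * ibinom (n-1) s"
definition dl :: fn3 where
  "dl n r s = (if n = 0 \<and> r = 0 \<and> s = 0 then 1 else 0)"
definition van :: "int \<Rightarrow> fn3 \<Rightarrow> bool" where
  "van N f \<longleftrightarrow> (\<forall>n r s. n > N \<longrightarrow> f n r s = 0)"

lemma ib_neg1: "m < 0 \<Longrightarrow> ibinom m a = 0"
  by (simp add: ibinom_def)
lemma ib_neg2: "a < 0 \<Longrightarrow> ibinom m a = 0"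
  by (simp add: ibinom_def)
lemma ib_zero: "ibinom 0 a = (if a = 0 then 1 else 0)"
  by (simp add: ibinom_def)

lemma Om_Ah: "Om Ah n r s = (if n = 1 then (if r = 0 \<and> s = 1 then 1 else 0) - (if r = 1 \<and> s = 0 then 1 else 0) else 0)"
proof -
  consider "n \<le> 0" | "n = 1" | "n \<ge> 2" by linarith
  then show ?thesis
  proof cases
    case 1 then show ?thesis by (simp add: Om_def Ah_def ib_neg1)
  next
    case 2 then show ?thesis by (simp add: Om_def Ah_def ib_neg1 ib_zero)
  next
    case 3
    have p: "\<And>a. ibinom (n-1) a = ibinom (n-2) a + ibinom (n-2) (a-1)"
      using ib_pascal[of "n-1"] 3 by simp
    show ?thesis using 3 unfolding Om_def Ah_def p by (simp add: algebra_simps)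
  qed
qed

lemma van_Om_Ah: "van 1 (Om Ah)"
  by (simp add: van_def Om_Ah)

lemma U1_V: "Usig 1 f n r s - Vop f n r s = Om f n r s"
  by (simp add: Usig_def cop_def padd_def gsh_def Vop_def Om_def algebra_simps)
lemma Um_Vp: "Usig (-1) f n r s - Vp f n r s = Om f n r s"
  by (simp add: Usig_def cop_def padd_def gsh_def Vp_def Om_def algebra_simps)
lemma Om_Vop: "Om (Vop f) = Vop (Om f)"
  by (simp add: Vop_def Om_def fun_eq_iff algebra_simps)
lemma Om_Vp: "Om (Vp f) = Vp (Om f)"
  by (simp add: Vp_def padd_def gsh_def Om_def fun_eq_iff algebra_simps)
lemma Usig_lin: "Usig c (\<lambda>n r s. f n r s - g n r s) = (\<lambda>n r s. Usig c f n r s - Usig c g n r s)"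
  by (simp add: Usig_def cop_def padd_def gsh_def fun_eq_iff algebra_simps)
lemma van_Usig: "van N f \<Longrightarrow> van (N+1) (Usig c f)"
  by (simp add: van_def Usig_def cop_def padd_def gsh_def)
lemma van_Vop: "van N f \<Longrightarrow> van (N+1) (Vop f)"
  by (simp add: van_def Vop_def)
lemma van_Vp: "van N f \<Longrightarrow> van (N+1) (Vp f)"
  by (simp add: van_def Vp_def padd_def gsh_def)

lemma van_pow:
  assumes "\<And>N f. van N f \<Longrightarrow> van (N+1) (B f)" "van N g"
  shows "van (N + int k) ((B^^k) g)"
proof (induction k)
  case 0 then show ?case using assms(2) by simp
next
  case (Suc k) from assms(1)[OF Suc.IH] show ?case by (simp add: algebra_simps)
qed

lemma tele:
  assumes linA: "\<And>f g. A (\<lambda>n r s. f n r s - g n r s) = (\<lambda>n r s. A f n r s - A g n r s)"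
  and rA: "\<And>N f. van N f \<Longrightarrow> van (N+1) (A f)"
  and rB: "\<And>N f. van N f \<Longrightarrow> van (N+1) (B f)"
  and d: "\<And>f n r s. A f n r s - B f n r s = Om f n r s"
  and cm: "\<And>f. Om (B f) = B (Om f)"
  and g: "van 1 (Om g)"
  shows "van (int k) (\<lambda>n r s. (A^^k) g n r s - (B^^k) g n r s)"
proof (induction k)
  case 0
  then show ?case by (simp add: van_def)
next
  case (Suc k)
  have c1: "Om ((B^^k) g) = (B^^k) (Om g)"
    using comm_pow[where A=B and B=Om, OF cm[symmetric]] by simp
  have v1: "van (int k + 1) (A (\<lambda>n r s. (A^^k) g n r s - (B^^k) g n r s))"
    using rA[OF Suc.IH] .
  have v2: "van (1 + int k) ((B^^k) (Om g))"
    using van_pow[OF rB g] .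
  have eq: "(A^^Suc k) g n r s - (B^^Suc k) g n r s =
     A (\<lambda>n r s. (A^^k) g n r s - (B^^k) g n r s) n r s + Om ((B^^k) g) n r s" for n r s
    using d[of "(B^^k) g" n r s] by (simp add: linA)
  show ?case using v1 v2 unfolding van_def eq c1 by (simp add: add.commute)
qed

definition B0 :: fn3 where "B0 n r s = Ah n r s + dl n r s"

definition lowsupp :: "fn3 \<Rightarrow> bool" where
  "lowsupp f \<longleftrightarrow> (\<forall>n r s. r < s \<longrightarrow> f n r s = 0)"

lemma lowsupp_Om_B0: "lowsupp (Om B0)"
proof -
  have "Om B0 n r s = Om Ah n r s + Om dl n r s" for n r s
    by (simp add: Om_def B0_def)
  then show ?thesis unfolding lowsupp_def Om_Ah by (auto simp: Om_def dl_def)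
qed

lemma lowsupp_Vop: "lowsupp f \<Longrightarrow> lowsupp (Vop f)"
  by (simp add: lowsupp_def Vop_def)

lemma lowsupp_pow: "lowsupp f \<Longrightarrow> lowsupp ((Vop^^k) f)"
  by (induction k) (simp_all add: lowsupp_Vop)

lemma F_rec:
  assumes "r < s"
  shows "(Vop^^k) B0 n r s = (Vop^^k) B0 (n-1) r s + (Vop^^k) B0 (n-1) (r-1) s
       + (Vop^^k) B0 (n-1) r (s-1) + (Vop^^k) B0 (n-1) (r-1) (s-1)"
proof -
  have "Om ((Vop^^k) B0) = (Vop^^k) (Om B0)"
    using comm_pow[where A=Vop and B=Om, OF Om_Vop[symmetric]] by simp
  then have "lowsupp (Om ((Vop^^k) B0))" using lowsupp_pow[OF lowsupp_Om_B0] by simp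
  then have "Om ((Vop^^k) B0) n r s = 0" using assms by (simp add: lowsupp_def)
  then show ?thesis by (simp add: Om_def)
qed

lemma F_zero: "(Vop^^k) B0 0 r s = (if k = 0 \<and> r = 0 \<and> s = 0 then 1 else 0)"
proof (cases k)
  case 0 then show ?thesis by (simp add: B0_def Ah_def dl_def ib_neg1)
next
  case (Suc k')
  have "\<forall>n r s. n < 0 \<longrightarrow> (Vop^^j) B0 n r s = 0" for j
    by (induction j) (simp_all add: B0_def Ah_def dl_def ib_neg1 Vop_def)
  then show ?thesis using Suc by (simp add: Vop_def)
qed

fun Gf :: "nat \<Rightarrow> int \<Rightarrow> int \<Rightarrow> nat \<Rightarrow> nat" where
  "Gf 0 r s k = (if r = 0 \<and> s = 0 \<and> k = 0 then 1 else 0)"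
| "Gf (Suc n) r s k = (if r = s then (if k = 0 then 0 else
       Gf n r s (k-1) + Gf n (r-1) s (k-1) + Gf n r (s-1) (k-1) + Gf n (r-1) (s-1) (k-1))
     else Gf n r s k + Gf n (r-1) s k + Gf n r (s-1) k + Gf n (r-1) (s-1) k)"

lemma Gf_sym: "Gf n r s k = Gf n s r k"
  by (induction n arbitrary: r s k) auto

lemma G_eq: "r \<le> s \<Longrightarrow> real (Gf m r s k) = (Vop^^k) B0 (int m) r s"
proof (induction m arbitrary: r s k)
  case 0
  then show ?case by (simp add: F_zero)
next
  case (Suc m)
  show ?case
  proof (cases "r = s")
    case True
    show ?thesis
    proof (cases k)
      case 0
      then show ?thesis using True by (simp add: B0_def Ah_def dl_def)
    next
      case (Suc k')
      have "real (Gf (Suc m) r s k) = real (Gf m r r k') + 2 * real (Gf m (r-1) r k') + real (Gf m (r-1) (r-1) k')"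
        using True Suc Gf_sym[of m r "r-1" k'] by simp
      also have "\<dots> = (Vop^^k') B0 (int m) r r + 2 * (Vop^^k') B0 (int m) (r-1) r + (Vop^^k') B0 (int m) (r-1) (r-1)"
        using Suc.IH by simp
      also have "\<dots> = (Vop^^k) B0 (int (Suc m)) r s"
        using True Suc by (simp add: Vop_def)
      finally show ?thesis .
    qed
  next
    case False
    then have rs: "r < s" using Suc.prems by simp
    have "real (Gf (Suc m) r s k) = real (Gf m r s k) + real (Gf m (r-1) s k) + real (Gf m r (s-1) k) + real (Gf m (r-1) (s-1) k)"
      using False by simp
    also have "\<dots> = (Vop^^k) B0 (int m) r s + (Vop^^k) B0 (int m) (r-1) s + (Vop^^k) B0 (int m) r (s-1) + (Vop^^k) B0 (int m) (r-1) (s-1)"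
      using Suc.IH rs by simp
    also have "\<dots> = (Vop^^k) B0 (int (Suc m)) r s"
      using F_rec[OF rs, of k "int (Suc m)"] by simp
    finally show ?thesis .
  qed
qed

lemma Vop_pow_add: "(Vop^^k) (\<lambda>n r s. f n r s + g n r s) = (\<lambda>n r s. (Vop^^k) f n r s + (Vop^^k) g n r s)"
  by (induction k) (simp_all add: Vop_def fun_eq_iff algebra_simps)

lemma G_main:
  assumes "r \<le> s" "m > k"
  shows "real (Gf m r s k) = (Vp^^k) Ah (int m) r s + (Usig 1^^k) Ah (int m) r s - (Usig (-1)^^k) Ah (int m) r s"
proof -
  have vd: "van 0 dl" by (auto simp: van_def dl_def)
  have "(Vop^^k) B0 = (\<lambda>n r s. (Vop^^k) Ah n r s + (Vop^^k) dl n r s)"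
    using Vop_pow_add[of k Ah dl] by (simp add: B0_def[abs_def])
  moreover have "van (0 + int k) ((Vop^^k) dl)"
    by (rule van_pow[OF van_Vop vd])
  ultimately have e1: "real (Gf m r s k) = (Vop^^k) Ah (int m) r s"
    using G_eq[OF assms(1), of m k] assms(2) by (simp add: van_def)
  have t1: "van (int k) (\<lambda>n r s. (Usig 1^^k) Ah n r s - (Vop^^k) Ah n r s)"
    by (rule tele[OF Usig_lin van_Usig van_Vop U1_V Om_Vop van_Om_Ah])
  have t2: "van (int k) (\<lambda>n r s. (Usig (-1)^^k) Ah n r s - (Vp^^k) Ah n r s)"
    by (rule tele[OF Usig_lin van_Usig van_Vp Um_Vp Om_Vp van_Om_Ah])
  show ?thesis using e1 t1 t2 assms(2) unfolding van_def by force
qed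



lemma ib_L1:
  assumes "N \<ge> 1"
  shows "real_of_int N * ibinom (N-1) a = real_of_int (N - a) * ibinom N a"
proof -
  consider "a < 0" | "a > N" | "0 \<le> a \<and> a \<le> N" by linarith
  then show ?thesis
  proof cases
    case 1 then show ?thesis by (simp add: ibinom_def)
  next
    case 2
    have "nat N < nat a" "nat (N-1) < nat a" using 2 assms by auto
    then show ?thesis using 2 assms by (simp add: ibinom_def binomial_eq_0)
  next
    case 3
    have "(nat N - nat a) * (nat N choose nat a) = nat N * ((nat N - 1) choose nat a)"
      by (rule binomial_absorb_comp)
    then have "real (nat N - nat a) * real (nat N choose nat a) = real (nat N) * real ((nat N - 1) choose nat a)"
      by (metis of_nat_mult)
    moreover have "real (nat N - nat a) = real_of_int (N - a)"
    proof -
      have "nat N - nat a = nat (N - a)" using 3 by (simp add: nat_diff_distrib)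
      then show ?thesis using 3 by simp
    qed
    moreover have "nat (N - 1) = nat N - 1" using assms by simp
    ultimately show ?thesis using 3 assms by (simp add: ibinom_def)
  qed
qed

lemma ib_L2:
  assumes "N \<ge> 1"
  shows "real_of_int N * ibinom (N-1) (a-1) = real_of_int a * ibinom N a"
proof -
  consider "a \<le> 0" | "a \<ge> 1" by linarith
  then show ?thesis
  proof cases
    case 1 then show ?thesis by (cases "a = 0") (simp_all add: ibinom_def)
  next
    case 2
    have "Suc (nat a - 1) * (nat N choose Suc (nat a - 1)) = nat N * ((nat N - 1) choose (nat a - 1))"
      by (rule binomial_absorption)
    moreover have "Suc (nat a - 1) = nat a" using 2 by simp
    ultimately have "real (nat a) * real (nat N choose nat a) = real (nat N) * real ((nat N - 1) choose (nat a - 1))"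
      by (metis of_nat_mult)
    moreover have "nat (N - 1) = nat N - 1" "nat (a - 1) = nat a - 1" using assms 2 by auto
    ultimately show ?thesis using 2 assms by (simp add: ibinom_def)
  qed
qed

lemma Ah_alt: "Ah N a b = real_of_int (b - a) / real_of_int N * ibinom N b * ibinom N a"
proof -
  consider "N < 0" | "N = 0" | "N \<ge> 1" by linarith
  then show ?thesis
  proof cases
    case 1 then show ?thesis by (simp add: Ah_def ibinom_def)
  next
    case 2 then show ?thesis by (simp add: Ah_def ibinom_def)
  next
    case 3
    have N0: "real_of_int N \<noteq> 0" using 3 by simp
    have "real_of_int N * real_of_int N * Ah N a b =
       (real_of_int N * ibinom (N-1) a) * (real_of_int N * ibinom (N-1) (b-1))
       - (real_of_int N * ibinom (N-1) (a-1)) * (real_of_int N * ibinom (N-1) b)"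
      by (simp add: Ah_def algebra_simps)
    also have "\<dots> = real_of_int N * (real_of_int (b - a) * ibinom N b * ibinom N a)"
      unfolding ib_L1[OF 3, of a] ib_L1[OF 3, of b] ib_L2[OF 3, of a] ib_L2[OF 3, of b] by (simp add: algebra_simps)
    finally have "real_of_int N * Ah N a b = real_of_int (b - a) * ibinom N b * ibinom N a"
      using N0 by (simp add: mult.assoc)
    then show ?thesis using N0 by (simp add: field_simps)
  qed
qed

lemma parity_sum:
  fixes h :: "nat \<Rightarrow> real"
  shows "(\<Sum>a\<le>k. (1 - (-1)^a) * h a) = 2 * (\<Sum>t\<in>{0..k}. if 2*t+1 \<le> k then h (2*t+1) else 0)"
proof -
  have "(\<Sum>a\<le>k. (1 - (-1)^a) * h a) = (\<Sum>a\<in>{a\<in>{..k}. odd a}. 2 * h a)"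
    by (subst sum.inter_filter) (auto intro!: sum.cong)
  also have "{a\<in>{..k}. odd a} = (\<lambda>t. 2*t+1) ` {t\<in>{0..k}. 2*t+1 \<le> k}"
    by (auto simp: image_iff elim!: oddE)
  also have "(\<Sum>a\<in>(\<lambda>t. 2*t+1) ` {t\<in>{0..k}. 2*t+1 \<le> k}. 2 * h a) = (\<Sum>t\<in>{t\<in>{0..k}. 2*t+1 \<le> k}. 2 * h (2*t+1))"
    by (subst sum.reindex) (auto simp: inj_on_def)
  also have "\<dots> = (\<Sum>t\<in>{0..k}. if 2*t+1 \<le> k then 2 * h (2*t+1) else 0)"
    by (subst sum.inter_filter) auto
  also have "\<dots> = 2 * (\<Sum>t\<in>{0..k}. if 2*t+1 \<le> k then h (2*t+1) else 0)"
    by (subst sum_distrib_left) (rule sum.cong, auto)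
  finally show ?thesis .
qed



lemma part_a:
  fixes n r s k :: nat
  assumes "k < n"
  shows "(Vp^^k) Ah (int n) (int r) (int s) = (real s - real r) / (real n - real k) *
        (\<Sum>j\<in>{0..k}. ibinom (int k) (int j) * ibinom (int n - int k) (int r - int j)
                        * ibinom (int n - int k) (int s - int j))"
proof -
  have "(Vp^^k) Ah (int n) (int r) (int s) = (\<Sum>a\<le>k. real (k choose a) * Ah (int n - int k) (int r - int a) (int s - int a))"
    by (rule Vp_pow)
  also have "\<dots> = (\<Sum>j\<in>{0..k}. (real s - real r) / (real n - real k) * (ibinom (int k) (int j) * ibinom (int n - int k) (int r - int j)
                        * ibinom (int n - int k) (int s - int j)))"
    unfolding atMost_atLeast0
    by (rule sum.cong[OF refl]) (simp add: Ah_alt ibinom_def)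
  finally show ?thesis by (simp add: sum_distrib_left)
qed

lemma part_b1:
  fixes n r s k :: nat
  shows "(Usig 1^^k) Ah (int n) (int r) (int s) - (Usig (-1)^^k) Ah (int n) (int r) (int s) =
     (\<Sum>a\<le>k. (1 - (-1)^a) * (real (k choose a) * (\<Sum>j\<le>k-a. real ((k-a) choose j) * (-1)^j * Ah (int n - int a - int j) (int r - int a) (int s - int j))))"
  unfolding Usig_pow sum_subtractf[symmetric]
  by (rule sum.cong[OF refl]) (simp add: algebra_simps)

lemma part_b2:
  fixes n r s k t :: nat
  shows "(if 2*t+1 \<le> k then real (k choose (2*t+1)) * (\<Sum>j\<le>k-(2*t+1). real ((k-(2*t+1)) choose j) * (-1)^j * Ah (int n - int (2*t+1) - int j) (int r - int (2*t+1)) (int s - int j)) else 0)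
    = (\<Sum>j\<in>{0..k}.
          (-1) ^ j * (real_of_int (int s - int j - int r + 1 + 2 * int t)
                       / real_of_int (int n - 1 - int j - 2 * int t))
          * ibinom (int k) (2 * int t + 1) * ibinom (int k - 1 - 2 * int t) (int j)
          * ibinom (int n - 1 - int j - 2 * int t) (int s - int j)
          * ibinom (int n - 1 - int j - 2 * int t) (int r - 1 - 2 * int t))"
proof (cases "2*t+1 \<le> k")
  case False
  then have "ibinom (int k) (2 * int t + 1) = 0"
    by (simp add: ibinom_def binomial_eq_0 nat_add_distrib nat_mult_distrib)
  then show ?thesis using False by simp
next
  case True
  define m where "m = k - (2*t+1)"
  have km: "int k - 1 - 2 * int t = int m" using True by (simp add: m_def)
  have kc: "ibinom (int k) (2 * int t + 1) = real (k choose (2*t+1))"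
    by (simp add: ibinom_def nat_add_distrib nat_mult_distrib)
  have trm: "(-1) ^ j * (real_of_int (int s - int j - int r + 1 + 2 * int t)
                       / real_of_int (int n - 1 - int j - 2 * int t))
          * ibinom (int k) (2 * int t + 1) * ibinom (int k - 1 - 2 * int t) (int j)
          * ibinom (int n - 1 - int j - 2 * int t) (int s - int j)
          * ibinom (int n - 1 - int j - 2 * int t) (int r - 1 - 2 * int t)
     = real (k choose (2*t+1)) * (ibinom (int m) (int j) * (-1)^j * Ah (int n - int (2*t+1) - int j) (int r - int (2*t+1)) (int s - int j))" for j
  proof -
    have "Ah (int n - int (2*t+1) - int j) (int r - int (2*t+1)) (int s - int j)
       = real_of_int (int s - int j - int r + 1 + 2 * int t) / real_of_int (int n - 1 - int j - 2 * int t)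
         * ibinom (int n - 1 - int j - 2 * int t) (int s - int j) * ibinom (int n - 1 - int j - 2 * int t) (int r - 1 - 2 * int t)"
      unfolding Ah_alt by (simp add: algebra_simps)
    then show ?thesis unfolding km kc by (simp add: algebra_simps)
  qed
  have "(\<Sum>j\<in>{0..k}. real (k choose (2*t+1)) * (ibinom (int m) (int j) * (-1)^j * Ah (int n - int (2*t+1) - int j) (int r - int (2*t+1)) (int s - int j)))
      = (\<Sum>j\<in>{0..m}. real (k choose (2*t+1)) * (ibinom (int m) (int j) * (-1)^j * Ah (int n - int (2*t+1) - int j) (int r - int (2*t+1)) (int s - int j)))"
    by (rule sum.mono_neutral_right) (auto simp: m_def ibinom_def)
  also have "\<dots> = real (k choose (2*t+1)) * (\<Sum>j\<le>m. real (m choose j) * (-1)^j * Ah (int n - int (2*t+1) - int j) (int r - int (2*t+1)) (int s - int j))"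
    unfolding atMost_atLeast0 sum_distrib_left by (rule sum.cong[OF refl]) (simp add: ibinom_def)
  finally show ?thesis using True unfolding trm by (simp add: m_def)
qed

lemma formula_eq:
  fixes n r s k :: nat
  assumes "k < n"
  shows "(Vp^^k) Ah (int n) (int r) (int s) + ((Usig 1^^k) Ah (int n) (int r) (int s) - (Usig (-1)^^k) Ah (int n) (int r) (int s)) =
      2 * (\<Sum>t\<in>{0..k}. \<Sum>j\<in>{0..k}.
          (-1) ^ j * (real_of_int (int s - int j - int r + 1 + 2 * int t)
                       / real_of_int (int n - 1 - int j - 2 * int t))
          * ibinom (int k) (2 * int t + 1) * ibinom (int k - 1 - 2 * int t) (int j)
          * ibinom (int n - 1 - int j - 2 * int t) (int s - int j)
          * ibinom (int n - 1 - int j - 2 * int t) (int r - 1 - 2 * int t))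
    + (real s - real r) / (real n - real k) *
        (\<Sum>j\<in>{0..k}. ibinom (int k) (int j) * ibinom (int n - int k) (int r - int j)
                        * ibinom (int n - int k) (int s - int j))"
proof -
  have "(Usig 1^^k) Ah (int n) (int r) (int s) - (Usig (-1)^^k) Ah (int n) (int r) (int s) =
      2 * (\<Sum>t\<in>{0..k}. \<Sum>j\<in>{0..k}.
          (-1) ^ j * (real_of_int (int s - int j - int r + 1 + 2 * int t)
                       / real_of_int (int n - 1 - int j - 2 * int t))
          * ibinom (int k) (2 * int t + 1) * ibinom (int k - 1 - 2 * int t) (int j)
          * ibinom (int n - 1 - int j - 2 * int t) (int s - int j)
          * ibinom (int n - 1 - int j - 2 * int t) (int r - 1 - 2 * int t))"
    unfolding part_b1 parity_sum part_b2[symmetric] by (simp add: if_distrib)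
  then show ?thesis using part_a[OF assms, of r s] by simp
qed



definition LP :: "nat \<Rightarrow> (nat \<times> nat) list set" where
  "LP n = {p. length p = n + 1 \<and> p ! 0 = (0,0) \<and> (\<forall>i < n. p ! Suc i = (fst (p ! i) + 1, snd (p ! i)) \<or>
                   p ! Suc i = (fst (p ! i), snd (p ! i) + 1))}"

definition stp :: "bool \<Rightarrow> nat \<times> nat \<Rightarrow> nat \<times> nat" where
  "stp b v = (if b then (fst v + 1, snd v) else (fst v, snd v + 1))"

definition cc :: "nat \<Rightarrow> (nat \<times> nat) list \<Rightarrow> (nat \<times> nat) list \<Rightarrow> nat" where
  "cc n P Q = card {i \<in> {1..n}. P ! i = Q ! i}"

definition SS :: "nat \<Rightarrow> int \<Rightarrow> int \<Rightarrow> nat \<Rightarrow> ((nat \<times> nat) list \<times> (nat \<times> nat) list) set" where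
  "SS n r s k = {(P,Q). P \<in> LP n \<and> Q \<in> LP n \<and> int (fst (P!n)) = r \<and> int (fst (Q!n)) = s \<and> cc n P Q = k}"

definition extn :: "nat \<Rightarrow> bool \<Rightarrow> bool \<Rightarrow> (nat \<times> nat) list \<times> (nat \<times> nat) list \<Rightarrow> (nat \<times> nat) list \<times> (nat \<times> nat) list" where
  "extn n b1 b2 PQ = (fst PQ @ [stp b1 (fst PQ ! n)], snd PQ @ [stp b2 (snd PQ ! n)])"

lemma LP_level: "p \<in> LP n \<Longrightarrow> i \<le> n \<Longrightarrow> fst (p!i) + snd (p!i) = i"
proof (induction i)
  case 0 then show ?case by (simp add: LP_def)
next
  case (Suc i)
  then have "p ! Suc i = (fst (p ! i) + 1, snd (p ! i)) \<or> p ! Suc i = (fst (p ! i), snd (p ! i) + 1)"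
    by (simp add: LP_def)
  then show ?case using Suc by auto
qed

lemma LP_len: "p \<in> LP n \<Longrightarrow> length p = n + 1"
  by (simp add: LP_def)

lemma LP_finite: "finite (LP n)"
proof -
  have "LP n \<subseteq> {p. set p \<subseteq> {0..n} \<times> {0..n} \<and> length p = n + 1}"
  proof
    fix p assume p: "p \<in> LP n"
    have "x \<in> {0..n} \<times> {0..n}" if "x \<in> set p" for x
    proof -
      obtain i where i: "i < length p" "x = p ! i" using \<open>x \<in> set p\<close> by (auto simp: in_set_conv_nth)
      then have "i \<le> n" using LP_len[OF p] by simp
      then have "fst x \<le> n" "snd x \<le> n" using LP_level[OF p, of i] i by auto
      then show ?thesis by (auto simp: mem_Times_iff)
    qed
    then show "p \<in> {p. set p \<subseteq> {0..n} \<times> {0..n} \<and> length p = n + 1}" using LP_len[OF p] by auto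
  qed
  moreover have "finite {p. set p \<subseteq> {0..n} \<times> {0..n} \<and> length p = n + 1}"
    by (rule finite_lists_length_eq) simp
  ultimately show ?thesis by (rule finite_subset)
qed

lemma SS_finite: "finite (SS n r s k)"
proof -
  have "SS n r s k \<subseteq> LP n \<times> LP n" by (auto simp: SS_def)
  then show ?thesis using LP_finite finite_subset by blast
qed

lemma fst_stp: "fst (stp b v) = fst v + (if b then 1 else 0)"
  by (simp add: stp_def)
lemma lev_stp: "fst (stp b v) + snd (stp b v) = fst v + snd v + 1"
  by (simp add: stp_def)

lemma LP_snoc:
  assumes "P \<in> LP n"
  shows "P @ [stp b (P!n)] \<in> LP (Suc n)"
proof -
  have len: "length P = n + 1" using assms by (simp add: LP_def)
  have st: "(P @ [stp b (P!n)]) ! Suc i = (fst ((P @ [stp b (P!n)]) ! i) + 1, snd ((P @ [stp b (P!n)]) ! i)) \<or>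
        (P @ [stp b (P!n)]) ! Suc i = (fst ((P @ [stp b (P!n)]) ! i), snd ((P @ [stp b (P!n)]) ! i) + 1)"
    if "i < Suc n" for i
  proof (cases "i < n")
    case True
    have "\<forall>i<n. P ! Suc i = (fst (P ! i) + 1, snd (P ! i)) \<or> P ! Suc i = (fst (P ! i), snd (P ! i) + 1)"
      using assms by (simp add: LP_def)
    then have "P ! Suc i = (fst (P ! i) + 1, snd (P ! i)) \<or> P ! Suc i = (fst (P ! i), snd (P ! i) + 1)"
      using True by blast
    moreover have "(P @ [stp b (P!n)]) ! Suc i = P ! Suc i" "(P @ [stp b (P!n)]) ! i = P ! i"
      using True len by (simp_all add: nth_append)
    ultimately show ?thesis by simp
  next
    case False
    then have "i = n" using that by simp
    then show ?thesis using len by (simp add: nth_append stp_def)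
  qed
  have zero: "(P @ [stp b (P!n)]) ! 0 = (0,0)" using assms len by (simp add: LP_def nth_append)
  have "length (P @ [stp b (P!n)]) = Suc n + 1" using len by simp
  then show ?thesis unfolding LP_def using st zero by blast
qed

lemma LP_Suc_dest:
  assumes "P' \<in> LP (Suc n)"
  shows "butlast P' \<in> LP n \<and> (\<exists>b. P' = butlast P' @ [stp b (butlast P' ! n)])"
proof -
  have len: "length P' = n + 2" using assms by (simp add: LP_def)
  have bl: "butlast P' ! i = P' ! i" if "i \<le> n" for i
    using that len by (simp add: nth_butlast)
  have stall: "\<forall>i<Suc n. P' ! Suc i = (fst (P' ! i) + 1, snd (P' ! i)) \<or> P' ! Suc i = (fst (P' ! i), snd (P' ! i) + 1)"
    using assms by (simp add: LP_def)
  have z: "P' ! 0 = (0,0)" using assms by (simp add: LP_def)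
  have "butlast P' ! Suc i = (fst (butlast P' ! i) + 1, snd (butlast P' ! i)) \<or> butlast P' ! Suc i = (fst (butlast P' ! i), snd (butlast P' ! i) + 1)"
    if "i < n" for i
  proof -
    have "P' ! Suc i = (fst (P' ! i) + 1, snd (P' ! i)) \<or> P' ! Suc i = (fst (P' ! i), snd (P' ! i) + 1)"
      using stall that by simp
    then show ?thesis using bl[of i] bl[of "Suc i"] that by simp
  qed
  moreover have "length (butlast P') = n + 1" using len by simp
  moreover have "butlast P' ! 0 = (0,0)" using bl[of 0] z by simp
  ultimately have A: "butlast P' \<in> LP n" unfolding LP_def by blast
  have ne: "P' \<noteq> []" using len by auto
  have P'eq: "P' = butlast P' @ [last P']" using append_butlast_last_id[OF ne] by simp
  have lst: "last P' = P' ! Suc n" using len ne by (simp add: last_conv_nth)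
  have "P' ! Suc n = (fst (P' ! n) + 1, snd (P' ! n)) \<or> P' ! Suc n = (fst (P' ! n), snd (P' ! n) + 1)"
    using stall by simp
  then obtain b where "P' ! Suc n = stp b (P' ! n)"
    unfolding stp_def by (metis (full_types))
  then have "P' = butlast P' @ [stp b (butlast P' ! n)]" using P'eq lst bl[of n] by simp
  then show ?thesis using A by blast
qed

lemma cc_snoc:
  assumes "P \<in> LP n" "Q \<in> LP n"
  shows "cc (Suc n) (P @ [w1]) (Q @ [w2]) = cc n P Q + (if w1 = w2 then 1 else 0)"
proof -
  have lp: "length P = n + 1" "length Q = n + 1" using assms by (simp_all add: LP_def)
  have A: "(P @ [w1]) ! i = P ! i" "(Q @ [w2]) ! i = Q ! i" if "i \<le> n" for i
    using lp that by (simp_all add: nth_append)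
  have B: "(P @ [w1]) ! Suc n = w1" "(Q @ [w2]) ! Suc n = w2"
    using lp by (simp_all add: nth_append)
  have "{i \<in> {1..Suc n}. (P @ [w1]) ! i = (Q @ [w2]) ! i} = {i \<in> {1..n}. P ! i = Q ! i} \<union> (if w1 = w2 then {Suc n} else {})"
  proof (intro set_eqI iffI)
    fix i assume "i \<in> {i \<in> {1..Suc n}. (P @ [w1]) ! i = (Q @ [w2]) ! i}"
    then show "i \<in> {i \<in> {1..n}. P ! i = Q ! i} \<union> (if w1 = w2 then {Suc n} else {})"
      using A B by (cases "i = Suc n") auto
  next
    fix i assume "i \<in> {i \<in> {1..n}. P ! i = Q ! i} \<union> (if w1 = w2 then {Suc n} else {})"
    then show "i \<in> {i \<in> {1..Suc n}. (P @ [w1]) ! i = (Q @ [w2]) ! i}"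
      using A B by (cases "i = Suc n") (auto split: if_splits)
  qed
  moreover have "finite {i \<in> {1..n}. P ! i = Q ! i}" by simp
  moreover have "Suc n \<notin> {i \<in> {1..n}. P ! i = Q ! i}" by simp
  ultimately show ?thesis unfolding cc_def
    by (cases "w1 = w2") (simp_all only: if_True if_False Un_empty_right card_insert_disjoint Un_insert_right, simp_all)
qed

lemma stp_eq_iff:
  assumes "P \<in> LP n" "Q \<in> LP n"
  shows "(stp b1 (P!n) = stp b2 (Q!n)) \<longleftrightarrow> fst (stp b1 (P!n)) = fst (stp b2 (Q!n))"
proof -
  have a: "fst (stp b1 (P!n)) + snd (stp b1 (P!n)) = n + 1"
    using lev_stp[of b1 "P!n"] LP_level[OF assms(1), of n] by simp
  have b: "fst (stp b2 (Q!n)) + snd (stp b2 (Q!n)) = n + 1"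
    using lev_stp[of b2 "Q!n"] LP_level[OF assms(2), of n] by simp
  show ?thesis
  proof
    assume "fst (stp b1 (P!n)) = fst (stp b2 (Q!n))"
    moreover then have "snd (stp b1 (P!n)) = snd (stp b2 (Q!n))" using a b by linarith
    ultimately show "stp b1 (P!n) = stp b2 (Q!n)" by (simp add: prod_eq_iff)
  qed simp
qed



lemma LP_Suc_obtain:
  assumes "P' \<in> LP (Suc n)"
  obtains P b where "P \<in> LP n" "P' = P @ [stp b (P ! n)]"
  using LP_Suc_dest[OF assms] by blast

lemma SS_Suc:
  "SS (Suc n) r s k = (if r = s \<and> k = 0 then {} else
     (\<Union>b\<in>UNIV. extn n (fst b) (snd b) ` SS n (r - (if fst b then 1 else 0)) (s - (if snd b then 1 else 0)) (if r = s then k - 1 else k)))"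
proof -
  have key: "P' = P @ [stp b1 (P ! n)] \<Longrightarrow> Q' = Q @ [stp b2 (Q ! n)] \<Longrightarrow> P \<in> LP n \<Longrightarrow> Q \<in> LP n \<Longrightarrow>
     (P', Q') \<in> SS (Suc n) r s k \<longleftrightarrow>
     (r = s \<longrightarrow> k \<ge> 1) \<and> (P, Q) \<in> SS n (r - (if b1 then 1 else 0)) (s - (if b2 then 1 else 0)) (if r = s then k - 1 else k)"
    for P' Q' P Q b1 b2
  proof -
    assume P'2: "P' = P @ [stp b1 (P ! n)]" and Q'2: "Q' = Q @ [stp b2 (Q ! n)]" and PL: "P \<in> LP n" and QL: "Q \<in> LP n"
    have lp: "length P = n + 1" "length Q = n + 1" using PL QL by (simp_all add: LP_def)
    have e1: "P' ! Suc n = stp b1 (P ! n)" "Q' ! Suc n = stp b2 (Q ! n)"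
      using lp by (simp_all add: P'2 Q'2 nth_append)
    have L: "P' \<in> LP (Suc n)" "Q' \<in> LP (Suc n)" using LP_snoc[OF PL] LP_snoc[OF QL] by (simp_all add: P'2 Q'2)
    have cs: "cc (Suc n) P' Q' = cc n P Q + (if stp b1 (P ! n) = stp b2 (Q ! n) then 1 else 0)"
      unfolding P'2 Q'2 by (rule cc_snoc[OF PL QL])
    have eqv: "stp b1 (P!n) = stp b2 (Q!n) \<longleftrightarrow> fst (stp b1 (P!n)) = fst (stp b2 (Q!n))"
      by (rule stp_eq_iff[OF PL QL])
    have f1: "int (fst (stp b1 (P!n))) = int (fst (P!n)) + (if b1 then 1 else 0)"
         "int (fst (stp b2 (Q!n))) = int (fst (Q!n)) + (if b2 then 1 else 0)"
      by (simp_all add: fst_stp)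
    show ?thesis
    proof
      assume A: "(P', Q') \<in> SS (Suc n) r s k"
      then have fr: "int (fst (stp b1 (P!n))) = r" "int (fst (stp b2 (Q!n))) = s" "cc (Suc n) P' Q' = k"
        using e1 by (simp_all add: SS_def)
      then have "stp b1 (P!n) = stp b2 (Q!n) \<longleftrightarrow> r = s" using eqv by auto
      then have "cc n P Q + (if r = s then 1 else 0) = k" using cs fr(3) by simp
      then show "(r = s \<longrightarrow> k \<ge> 1) \<and> (P, Q) \<in> SS n (r - (if b1 then 1 else 0)) (s - (if b2 then 1 else 0)) (if r = s then k - 1 else k)"
        using fr f1 PL QL unfolding SS_def by auto
    next
      assume B: "(r = s \<longrightarrow> k \<ge> 1) \<and> (P, Q) \<in> SS n (r - (if b1 then 1 else 0)) (s - (if b2 then 1 else 0)) (if r = s then k - 1 else k)"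
      then have fr: "int (fst (stp b1 (P!n))) = r" "int (fst (stp b2 (Q!n))) = s"
        using f1 by (auto simp: SS_def)
      then have "stp b1 (P!n) = stp b2 (Q!n) \<longleftrightarrow> r = s" using eqv by auto
      then have "cc (Suc n) P' Q' = k" using cs B by (auto simp: SS_def)
      then show "(P', Q') \<in> SS (Suc n) r s k" using L e1 fr unfolding SS_def by simp
    qed
  qed
  show ?thesis
  proof (intro equalityI subsetI)
    fix x assume x: "x \<in> SS (Suc n) r s k"
    obtain P' Q' where x': "x = (P', Q')" by force
    have PQ': "P' \<in> LP (Suc n)" "Q' \<in> LP (Suc n)" using x x' by (auto simp: SS_def)
    obtain P b1 where P: "P \<in> LP n" "P' = P @ [stp b1 (P ! n)]" using LP_Suc_obtain[OF PQ'(1)] by blast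
    obtain Q b2 where Q: "Q \<in> LP n" "Q' = Q @ [stp b2 (Q ! n)]" using LP_Suc_obtain[OF PQ'(2)] by blast
    have K: "(r = s \<longrightarrow> k \<ge> 1) \<and> (P, Q) \<in> SS n (r - (if b1 then 1 else 0)) (s - (if b2 then 1 else 0)) (if r = s then k - 1 else k)"
      using key[OF P(2) Q(2) P(1) Q(1)] x x' by simp
    have xe: "x = extn n b1 b2 (P, Q)" using x' P(2) Q(2) by (simp add: extn_def)
    have nz: "\<not> (r = s \<and> k = 0)" using K by auto
    have m: "x \<in> extn n (fst (b1,b2)) (snd (b1,b2)) ` SS n (r - (if fst (b1,b2) then 1 else 0)) (s - (if snd (b1,b2) then 1 else 0)) (if r = s then k - 1 else k)"
      unfolding fst_conv snd_conv xe using K by (intro imageI) simp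
    show "x \<in> (if r = s \<and> k = 0 then {} else
     (\<Union>b\<in>UNIV. extn n (fst b) (snd b) ` SS n (r - (if fst b then 1 else 0)) (s - (if snd b then 1 else 0)) (if r = s then k - 1 else k)))"
      unfolding if_not_P[OF nz] by (rule UN_I[of "(b1,b2)"]) (simp, use m in simp)
  next
    fix x assume x: "x \<in> (if r = s \<and> k = 0 then {} else
     (\<Union>b\<in>UNIV. extn n (fst b) (snd b) ` SS n (r - (if fst b then 1 else 0)) (s - (if snd b then 1 else 0)) (if r = s then k - 1 else k)))"
    have nz: "\<not> (r = s \<and> k = 0)"
    proof
      assume "r = s \<and> k = 0" then show False using x by simp
    qed
    then have "x \<in> (\<Union>b\<in>UNIV. extn n (fst b) (snd b) ` SS n (r - (if fst b then 1 else 0)) (s - (if snd b then 1 else 0)) (if r = s then k - 1 else k))"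
      using x by (simp only: if_not_P[OF nz] if_False)
    then obtain b where "x \<in> extn n (fst b) (snd b) ` SS n (r - (if fst b then 1 else 0)) (s - (if snd b then 1 else 0)) (if r = s then k - 1 else k)"
      by blast
    then obtain y where y: "x = extn n (fst b) (snd b) y" "y \<in> SS n (r - (if fst b then 1 else 0)) (s - (if snd b then 1 else 0)) (if r = s then k - 1 else k)"
      by (rule imageE)
    obtain P Q where yPQ: "y = (P, Q)" by (cases y)
    have x2: "x = extn n (fst b) (snd b) (P, Q)" using y(1) yPQ by simp
    have PQ: "(P, Q) \<in> SS n (r - (if fst b then 1 else 0)) (s - (if snd b then 1 else 0)) (if r = s then k - 1 else k)"
      using y(2) yPQ by simp
    define b1 where "b1 = fst b"
    define b2 where "b2 = snd b"
    note x2 = x2[folded b1_def b2_def]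
    note PQ = PQ[folded b1_def b2_def]
    have PL: "P \<in> LP n" "Q \<in> LP n" using PQ by (auto simp: SS_def)
    have "(P @ [stp b1 (P ! n)], Q @ [stp b2 (Q ! n)]) \<in> SS (Suc n) r s k"
    proof -
      have K1: "r = s \<longrightarrow> 1 \<le> k" using nz by auto
      show ?thesis using key[of "P @ [stp b1 (P ! n)]" P b1 "Q @ [stp b2 (Q ! n)]" Q b2, OF refl refl PL] PQ K1 by blast
    qed
    then show "x \<in> SS (Suc n) r s k" using x2 by (simp add: extn_def)
  qed
qed

lemma extn_inj: "inj_on (extn n b1 b2) A"
  by (auto simp: inj_on_def extn_def)

lemma extn_disj:
  assumes "extn n b1 b2 x = extn n c1 c2 y"
  shows "b1 = c1 \<and> b2 = c2"
proof -
  have e: "fst x = fst y" "stp b1 (fst x ! n) = stp c1 (fst y ! n)"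
       "snd x = snd y" "stp b2 (snd x ! n) = stp c2 (snd y ! n)"
    using assms by (auto simp: extn_def)
  have "fst (stp b1 (fst x ! n)) = fst (stp c1 (fst x ! n))" using e(1,2) by simp
  then have 1: "b1 = c1" unfolding fst_stp by (cases b1; cases c1) simp_all
  have "fst (stp b2 (snd x ! n)) = fst (stp c2 (snd x ! n))" using e(3,4) by simp
  then have 2: "b2 = c2" unfolding fst_stp by (cases b2; cases c2) simp_all
  show ?thesis using 1 2 by simp
qed

lemma sum_bool2: "(\<Sum>b\<in>(UNIV::(bool \<times> bool) set). f b) = f (False,False) + f (True,False) + f (False,True) + (f (True,True)::nat)"
proof -
  have U: "(UNIV::(bool \<times> bool) set) = {(False,False),(True,False),(False,True),(True,True)}"
    by (auto intro: bool.exhaust)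
  show ?thesis unfolding U by (simp add: algebra_simps)
qed

lemma cc0: "cc 0 P Q = 0" by (simp add: cc_def)

lemma card_SS: "card (SS n r s k) = Gf n r s k"
proof (induction n arbitrary: r s k)
  case 0
  have L0: "LP 0 = {[(0,0)]}"
  proof (intro equalityI subsetI)
    fix p assume "p \<in> LP 0"
    then have "length p = 1" "p ! 0 = (0,0)" by (simp_all add: LP_def)
    then show "p \<in> {[(0,0)]}" by (cases p) auto
  qed (simp add: LP_def)
  have "SS 0 r s k = (if r = 0 \<and> s = 0 \<and> k = 0 then {([(0,0)],[(0,0)])} else {})"
    unfolding SS_def L0 cc0 by auto
  then show ?case by simp
next
  case (Suc n)
  show ?case
  proof (cases "r = s \<and> k = 0")
    case True
    then show ?thesis by (simp add: SS_Suc)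
  next
    case False
    let ?k = "if r = s then k - 1 else k"
    let ?A = "\<lambda>b. extn n (fst b) (snd b) ` SS n (r - (if fst b then 1 else 0)) (s - (if snd b then 1 else 0)) ?k"
    have "card (SS (Suc n) r s k) = card (\<Union>b\<in>UNIV. ?A b)" using False by (simp only: SS_Suc if_False)
    also have "\<dots> = (\<Sum>b\<in>UNIV. card (?A b))"
    proof (rule card_UN_disjoint)
      show "finite (UNIV :: (bool \<times> bool) set)" by simp
      show "\<forall>i\<in>UNIV. finite (?A i)" using SS_finite by blast
      show "\<forall>i\<in>UNIV. \<forall>j\<in>UNIV. i \<noteq> j \<longrightarrow> ?A i \<inter> ?A j = {}"
      proof (intro ballI impI)
        fix i j :: "bool \<times> bool" assume ij: "i \<noteq> j"
        show "?A i \<inter> ?A j = {}"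
        proof (rule equals0I)
          fix z assume "z \<in> ?A i \<inter> ?A j"
          then obtain u v where "z = extn n (fst i) (snd i) u" "z = extn n (fst j) (snd j) v" by blast
          then have "fst i = fst j \<and> snd i = snd j" using extn_disj by metis
          then show False using ij by (simp add: prod_eq_iff)
        qed
      qed
    qed
    also have "\<dots> = (\<Sum>b\<in>UNIV. Gf n (r - (if fst b then 1 else 0)) (s - (if snd b then 1 else 0)) ?k)"
      by (rule sum.cong[OF refl]) (simp only: card_image[OF extn_inj] Suc.IH)
    also have "\<dots> = Gf (Suc n) r s k"
      unfolding sum_bool2 using False by (cases "r = s") (simp_all add: algebra_simps)
    finally show ?thesis .
  qed
qed



lemma LP_lattice:
  assumes "r \<le> n"
  shows "lattice_paths r (n - r) = {P \<in> LP n. fst (P!n) = r}"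
proof (intro equalityI subsetI)
  fix P assume "P \<in> lattice_paths r (n - r)"
  then have "P \<in> LP n" "P ! n = (r, n - r)" using assms by (simp_all add: lattice_paths_def LP_def)
  then show "P \<in> {P \<in> LP n. fst (P!n) = r}" by simp
next
  fix P assume P: "P \<in> {P \<in> LP n. fst (P!n) = r}"
  then have L: "P \<in> LP n" and f: "fst (P!n) = r" by simp_all
  have "snd (P!n) = n - r" using LP_level[OF L, of n] f by simp
  then have "P ! n = (r, n - r)" using f by (simp add: prod_eq_iff)
  then show "P \<in> lattice_paths r (n - r)" using L assms by (simp add: lattice_paths_def LP_def)
qed

lemma common1:
  assumes P: "P \<in> LP n" and Q: "Q \<in> LP n"
  shows "set P \<inter> set Q - {(0,0)} = (\<lambda>i. P!i) ` {i \<in> {1..n}. P!i = Q!i}"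
    and "inj_on (\<lambda>i. P!i) {i \<in> {1..n}. P!i = Q!i}"
proof -
  have lp: "length P = n + 1" "length Q = n + 1" using P Q by (simp_all add: LP_def)
  show "set P \<inter> set Q - {(0,0)} = (\<lambda>i. P!i) ` {i \<in> {1..n}. P!i = Q!i}"
  proof (intro equalityI subsetI)
    fix x assume x: "x \<in> set P \<inter> set Q - {(0,0)}"
    then obtain i where i: "i < n + 1" "x = P ! i" using lp by (auto simp: in_set_conv_nth)
    obtain j where j: "j < n + 1" "x = Q ! j" using x lp by (auto simp: in_set_conv_nth)
    have "i = j" using LP_level[OF P, of i] LP_level[OF Q, of j] i j by simp
    moreover have "i \<noteq> 0"
    proof
      assume "i = 0"
      moreover have "P ! 0 = (0,0)" using P by (simp add: LP_def)
      ultimately show False using x i by simp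
    qed
    ultimately have "i \<in> {i \<in> {1..n}. P!i = Q!i}" using i j by auto
    then show "x \<in> (\<lambda>i. P!i) ` {i \<in> {1..n}. P!i = Q!i}" using i(2) by (rule rev_image_eqI)
  next
    fix x assume "x \<in> (\<lambda>i. P!i) ` {i \<in> {1..n}. P!i = Q!i}"
    then obtain i where i: "i \<in> {1..n}" "P!i = Q!i" "x = P!i" by auto
    have "x \<in> set P" "x \<in> set Q" using i lp by (auto simp: in_set_conv_nth intro!: exI[of _ i])
    moreover have "x \<noteq> (0,0)" using LP_level[OF P, of i] i by auto
    ultimately show "x \<in> set P \<inter> set Q - {(0,0)}" by simp
  qed
  show "inj_on (\<lambda>i. P!i) {i \<in> {1..n}. P!i = Q!i}"
  proof (rule inj_onI)
    fix i j assume "i \<in> {i \<in> {1..n}. P!i = Q!i}" "j \<in> {i \<in> {1..n}. P!i = Q!i}" "P ! i = P ! j"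
    then show "i = j" using LP_level[OF P, of i] LP_level[OF P, of j] by auto
  qed
qed

lemma common_card:
  assumes "P \<in> LP n" "Q \<in> LP n"
  shows "card (set P \<inter> set Q - {(0,0)}) = cc n P Q"
  unfolding common1(1)[OF assms] cc_def by (rule card_image[OF common1(2)[OF assms]])

lemma common_card2:
  assumes P: "P \<in> LP n" and Q: "Q \<in> LP n" and n: "n \<ge> 1" and e: "P!n = Q!n"
  shows "card (set P \<inter> set Q - {(0,0), P!n}) = cc n P Q - 1"
proof -
  have "P!n \<in> set P \<inter> set Q - {(0,0)}"
    unfolding common1(1)[OF P Q] using n e by auto
  moreover have "set P \<inter> set Q - {(0,0), P!n} = (set P \<inter> set Q - {(0,0)}) - {P!n}" by auto
  ultimately show ?thesis using common_card[OF P Q] by (simp add: card_Diff_singleton)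
qed

lemma cc_pos:
  assumes "n \<ge> 1" "P!n = Q!n"
  shows "cc n P Q \<ge> 1"
proof -
  have "{n} \<subseteq> {i \<in> {1..n}. P!i = Q!i}" using assms by auto
  moreover have "finite {i \<in> {1..n}. P!i = Q!i}" by simp
  ultimately have "card {n} \<le> card {i \<in> {1..n}. P!i = Q!i}" by (rule card_mono[rotated])
  then show ?thesis unfolding cc_def by simp
qed

lemma Mpairs_eq:
  assumes n: "n \<ge> 1" and rs: "r \<le> s" and sn: "s \<le> n" and k: "r = s \<longrightarrow> k \<ge> 1"
  shows "Mpairs n r s k = Gf n (int r) (int s) k"
proof -
  have rn: "r \<le> n" using rs sn by simp
  note LL = LP_lattice[OF rn] LP_lattice[OF sn]
  show ?thesis
proof (cases "r = s")
  case False
  have "{(P, Q). P \<in> lattice_paths r (n - r) \<and> Q \<in> lattice_paths s (n - s) \<and>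
      card (set P \<inter> set Q - {(0,0)}) = k} = SS n (int r) (int s) k"
    unfolding SS_def LL using rs sn
    by (auto simp: common_card)
  then show ?thesis using False card_SS by (simp add: Mpairs_def)
next
  case True
  have kk: "k \<ge> 1" using k True by simp
  have "{(P, Q). P \<in> lattice_paths r (n - r) \<and> Q \<in> lattice_paths r (n - r) \<and>
      card (set P \<inter> set Q - {(0,0), (r, n - r)}) = k - 1} = SS n (int r) (int r) k"
  proof (intro equalityI subsetI)
    fix x assume x: "x \<in> {(P, Q). P \<in> lattice_paths r (n - r) \<and> Q \<in> lattice_paths r (n - r) \<and>
      card (set P \<inter> set Q - {(0,0), (r, n - r)}) = k - 1}"
    obtain P Q where xPQ: "x = (P, Q)" by force
    have L: "P \<in> LP n" "Q \<in> LP n" "fst (P!n) = r" "fst (Q!n) = r"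
      using x xPQ rs sn unfolding LL by auto
    have pn: "P!n = (r, n - r)" "Q!n = (r, n - r)"
      using LP_level[OF L(1), of n] LP_level[OF L(2), of n] L(3,4) by (simp_all add: prod_eq_iff)
    have "card (set P \<inter> set Q - {(0,0), (r, n - r)}) = cc n P Q - 1"
      using common_card2[OF L(1) L(2) n] pn by simp
    then have c1: "cc n P Q - 1 = k - 1" using x xPQ by simp
    have "cc n P Q \<ge> 1" using cc_pos[OF n] pn by simp
    then have "cc n P Q = k" using c1 kk by arith
    then show "x \<in> SS n (int r) (int r) k" using L xPQ by (simp add: SS_def)
  next
    fix x assume x: "x \<in> SS n (int r) (int r) k"
    obtain P Q where xPQ: "x = (P, Q)" by force
    have L: "P \<in> LP n" "Q \<in> LP n" "fst (P!n) = r" "fst (Q!n) = r" "cc n P Q = k"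
      using x xPQ by (auto simp: SS_def)
    have pn: "P!n = (r, n - r)" "Q!n = (r, n - r)"
      using LP_level[OF L(1), of n] LP_level[OF L(2), of n] L(3,4) by (simp_all add: prod_eq_iff)
    have "card (set P \<inter> set Q - {(0,0), (r, n - r)}) = k - 1"
      using common_card2[OF L(1) L(2) n] pn L(5) by simp
    then show "x \<in> {(P, Q). P \<in> lattice_paths r (n - r) \<and> Q \<in> lattice_paths r (n - r) \<and>
      card (set P \<inter> set Q - {(0,0), (r, n - r)}) = k - 1}"
      using L xPQ rs sn unfolding LL by auto
  qed
  then show ?thesis using True card_SS by (simp add: Mpairs_def Npairs_def)
qed
qed

lemma main1:
  fixes n r s k :: nat
  assumes "n \<ge> 1" and "r \<le> s" and "s \<le> n" and "k \<le> n - 1" and "r = s \<longrightarrow> k \<ge> 1"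
  shows "real (Mpairs n r s k) =
      2 * (\<Sum>t\<in>{0..k}. \<Sum>j\<in>{0..k}.
          (-1) ^ j * (real_of_int (int s - int j - int r + 1 + 2 * int t)
                       / real_of_int (int n - 1 - int j - 2 * int t))
          * ibinom (int k) (2 * int t + 1) * ibinom (int k - 1 - 2 * int t) (int j)
          * ibinom (int n - 1 - int j - 2 * int t) (int s - int j)
          * ibinom (int n - 1 - int j - 2 * int t) (int r - 1 - 2 * int t))
    + (real s - real r) / (real n - real k) *
        (\<Sum>j\<in>{0..k}. ibinom (int k) (int j) * ibinom (int n - int k) (int r - int j)
                        * ibinom (int n - int k) (int s - int j))"
proof -
  have kn: "k < n" using assms by simp
  have "real (Mpairs n r s k) = real (Gf n (int r) (int s) k)"
    using Mpairs_eq assms by simp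
  also have "\<dots> = (Vp^^k) Ah (int n) (int r) (int s) + (Usig 1^^k) Ah (int n) (int r) (int s) - (Usig (-1)^^k) Ah (int n) (int r) (int s)"
    using G_main[of "int r" "int s" k n] assms kn by simp
  finally show ?thesis using formula_eq[OF kn, of r s] by simp
qed

theorem theorem2:
  fixes n r s k :: nat
  assumes "n \<ge> 1" and "r \<le> s" and "s \<le> n" and "k \<le> n - 1" and "r = s \<longrightarrow> k \<ge> 1"
  shows "real (Mpairs n r s k) =
      2 * (\<Sum>t\<in>{0..k}. \<Sum>j\<in>{0..k}.
          (-1) ^ j * (real_of_int (int s - int j - int r + 1 + 2 * int t)
                       / real_of_int (int n - 1 - int j - 2 * int t))
          * ibinom (int k) (2 * int t + 1) * ibinom (int k - 1 - 2 * int t) (int j)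
          * ibinom (int n - 1 - int j - 2 * int t) (int s - int j)
          * ibinom (int n - 1 - int j - 2 * int t) (int r - 1 - 2 * int t))
    + (real s - real r) / (real n - real k) *
        (\<Sum>j\<in>{0..k}. ibinom (int k) (int j) * ibinom (int n - int k) (int r - int j)
                        * ibinom (int n - int k) (int s - int j))
    \<and> (r < s \<longrightarrow> real (Mpairs n r s 0) =
          (real s - real r) / real n * real (n choose r) * real (n choose s))"
proof (intro conjI impI)
  show "real (Mpairs n r s k) =
      2 * (\<Sum>t\<in>{0..k}. \<Sum>j\<in>{0..k}.
          (-1) ^ j * (real_of_int (int s - int j - int r + 1 + 2 * int t)
                       / real_of_int (int n - 1 - int j - 2 * int t))
          * ibinom (int k) (2 * int t + 1) * ibinom (int k - 1 - 2 * int t) (int j)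
          * ibinom (int n - 1 - int j - 2 * int t) (int s - int j)
          * ibinom (int n - 1 - int j - 2 * int t) (int r - 1 - 2 * int t))
    + (real s - real r) / (real n - real k) *
        (\<Sum>j\<in>{0..k}. ibinom (int k) (int j) * ibinom (int n - int k) (int r - int j)
                        * ibinom (int n - int k) (int s - int j))"
    by (rule main1[OF assms])
next
  assume rs: "r < s"
  have "real (Mpairs n r s 0) =
      2 * (\<Sum>t\<in>{0..0}. \<Sum>j\<in>{0..0}.
          (-1) ^ j * (real_of_int (int s - int j - int r + 1 + 2 * int t)
                       / real_of_int (int n - 1 - int j - 2 * int t))
          * ibinom (int 0) (2 * int t + 1) * ibinom (int 0 - 1 - 2 * int t) (int j)
          * ibinom (int n - 1 - int j - 2 * int t) (int s - int j)
          * ibinom (int n - 1 - int j - 2 * int t) (int r - 1 - 2 * int t))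
    + (real s - real r) / (real n - real 0) *
        (\<Sum>j\<in>{0..0}. ibinom (int 0) (int j) * ibinom (int n - int 0) (int r - int j)
                        * ibinom (int n - int 0) (int s - int j))"
    using main1[of n r s 0] assms rs by simp
  then show "real (Mpairs n r s 0) = (real s - real r) / real n * real (n choose r) * real (n choose s)"
    by (simp add: ibinom_def)
qed


end
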